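(* Suppose there is a norm $\|\cdot\|$ on $\mathbb R^n$ and $L>0$ such that $f$ is $2$-uniformly smooth on $\mathrm{dom}(\Psi)$ with constant $L$. (a) If moreover $\Psi$ is $2$-uniformly convex on $\mathrm{dom}(\Psi)$ with constant $\mu>0$, then $(\mathcal D,\mathrm{gap})$ satisfies the $(2,1)$-growth property with $M=2L/\mu$. (b) If $\Psi=\delta_C$ is the indicator function of a closed convex set $C\subseteq\mathbb R^n$ which is $2$-uniformly convex with constant $\mu>0$, and $\ell:=\inf_{x\in C}\|\nabla f(x)\|^*>0$, then $(\mathcal D,\mathrm{gap})$ satisfies the $(2,1)$-growth property with $M=2L/(\ell\mu)$. Here the $(2,1)$-growth property with constant $M$ means: for all $x\in\mathrm{dom}(\Psi)$, $g=\nabla f(x)$, $s\in\partial\Psi^*(-g)$, $\mathcal D(x,s,\theta)\le\frac{M\theta^2}{2}\mathrm{gap}(x,g)$ for all $\theta\in[0,1]$.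
   Context: Let $f,\Psi:\mathbb{R}^n\to\mathbb{R}\cup\{\infty\}$ be closed proper convex functions such that (A1) $f$ is differentiable on $\mathrm{dom}(\Psi)$, and (A2) for every $x\in\mathrm{dom}(f)$ the set $\arg\min_s\{\langle\nabla f(x),s\rangle+\Psi(s)\}$ is nonempty. $f^*,\Psi^*$ denote convex conjugates; $\arg\min_y\{\langle g,y\rangle+\Psi(y)\}=\partial\Psi^*(-g)$. $D_f(y,x)=f(y)-f(x)-\langle\nabla f(x),y-x\rangle$. $\mathrm{gap}(x,u)=f(x)+\Psi(x)+f^*(u)+\Psi^*(-u)$. $\mathcal{D}(x,s,\theta)=D_f(x+\theta(s-x),x)+\Psi(x+\theta(s-x))-(1-\theta)\Psi(x)-\theta\Psi(s)$. $\|\cdot\|^*$ is the dual norm. $f$ is $q$-uniformly smooth on $C$ with constant $L$ if for all $x,y\in C$, $\theta\in[0,1]$: $f(x+\theta(y-x))\ge(1-\theta)f(x)+\theta f(y)-\frac Lq\theta(1-\theta)\|y-x\|^q$. $\Psi$ is $p$-uniformly convex on $C$ with constant $\mu$ ($p\ge2$) if for all $x,y\in C$, $\theta\in[0,1]$: $\Psi(x+\theta(y-x))\le(1-\theta)\Psi(x)+\theta\Psi(y)-\frac\mu p\theta(1-\theta)\|y-x\|^p$. A closed convex set $C$ is $p$-uniformly convex with constant $\mu$ ($p\ge2$) if for all $x,y\in C$, $\theta\in[0,1]$ and $\|z\|\le1$: $x+\theta(y-x)+\frac\mu p\theta(1-\theta)\|y-x\|^pz\in C$. *)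

theory Defs
  imports "HOL-Analysis.Analysis" "HOL-Library.Extended_Real"
begin

text \<open>Extended-real valued functions on R^n (modelled by a euclidean_space type
 with its standard inner product).\<close>

definition edom :: "('a \<Rightarrow> ereal) \<Rightarrow> 'a set" where
  "edom f = {x. f x \<noteq> \<infinity>}"

definition proper_fun :: "('a \<Rightarrow> ereal) \<Rightarrow> bool" where
  "proper_fun f \<longleftrightarrow> (\<forall>x. f x \<noteq> -\<infinity>) \<and> (\<exists>x. f x \<noteq> \<infinity>)"

definition closed_fun :: "('a::topological_space \<Rightarrow> ereal) \<Rightarrow> bool" where
  "closed_fun f \<longleftrightarrow> (\<forall>c::real. closed {x. f x \<le> ereal c})"

definition convex_efun :: "('a::real_vector \<Rightarrow> ereal) \<Rightarrow> bool" where
  "convex_efun f \<longleftrightarrow> (\<forall>x y. \<forall>\<theta>\<in>{0..1::real}.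
      f (x + \<theta> *\<^sub>R (y - x)) \<le> ereal (1 - \<theta>) * f x + ereal \<theta> * f y)"

definition conj_fun :: "('a::real_inner \<Rightarrow> ereal) \<Rightarrow> 'a \<Rightarrow> ereal" where
  "conj_fun f u = (SUP x. ereal (u \<bullet> x) - f x)"

definition esubdiff :: "('a::real_inner \<Rightarrow> ereal) \<Rightarrow> 'a \<Rightarrow> 'a set" where
  "esubdiff h v = {s. \<bar>h v\<bar> \<noteq> \<infinity> \<and> (\<forall>w. h v + ereal (s \<bullet> (w - v)) \<le> h w)}"

definition has_grad :: "('a::euclidean_space \<Rightarrow> ereal) \<Rightarrow> 'a \<Rightarrow> 'a \<Rightarrow> bool" where
  "has_grad f g x \<longleftrightarrow> (\<exists>e>0. \<forall>y\<in>ball x e. \<bar>f y\<bar> \<noteq> \<infinity>) \<and>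
      ((\<lambda>y. real_of_ereal (f y)) has_derivative (\<lambda>h. g \<bullet> h)) (at x)"

definition argmin_lin :: "'a::real_inner \<Rightarrow> ('a \<Rightarrow> ereal) \<Rightarrow> 'a set" where
  "argmin_lin g Psi = {s. \<forall>t. ereal (g \<bullet> s) + Psi s \<le> ereal (g \<bullet> t) + Psi t}"

definition is_norm :: "('a::real_vector \<Rightarrow> real) \<Rightarrow> bool" where
  "is_norm N \<longleftrightarrow> (\<forall>x. N x \<ge> 0) \<and> (\<forall>x. N x = 0 \<longleftrightarrow> x = 0) \<and>
     (\<forall>a x. N (a *\<^sub>R x) = \<bar>a\<bar> * N x) \<and> (\<forall>x y. N (x + y) \<le> N x + N y)"

definition dual_norm :: "('a::real_inner \<Rightarrow> real) \<Rightarrow> 'a \<Rightarrow> real" where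
  "dual_norm N g = Sup {g \<bullet> x | x. N x \<le> 1}"

definition bregman :: "('a::real_inner \<Rightarrow> ereal) \<Rightarrow> ('a \<Rightarrow> 'a) \<Rightarrow> 'a \<Rightarrow> 'a \<Rightarrow> ereal" where
  "bregman f gradf y x = f y - f x - ereal (gradf x \<bullet> (y - x))"

definition gap :: "('a::real_inner \<Rightarrow> ereal) \<Rightarrow> ('a \<Rightarrow> ereal) \<Rightarrow> 'a \<Rightarrow> 'a \<Rightarrow> ereal" where
  "gap f Psi x u = f x + Psi x + conj_fun f u + conj_fun Psi (- u)"

definition Dcal :: "('a::real_inner \<Rightarrow> ereal) \<Rightarrow> ('a \<Rightarrow> ereal) \<Rightarrow> ('a \<Rightarrow> 'a) \<Rightarrow> 'a \<Rightarrow> 'a \<Rightarrow> real \<Rightarrow> ereal" where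
  "Dcal f Psi gradf x s \<theta> =
     bregman f gradf (x + \<theta> *\<^sub>R (s - x)) x + Psi (x + \<theta> *\<^sub>R (s - x))
       - ereal (1 - \<theta>) * Psi x - ereal \<theta> * Psi s"

definition unif_smooth :: "('a::real_vector \<Rightarrow> ereal) \<Rightarrow> ('a \<Rightarrow> real) \<Rightarrow> real \<Rightarrow> real \<Rightarrow> 'a set \<Rightarrow> bool" where
  "unif_smooth f N q L C \<longleftrightarrow> (\<forall>x\<in>C. \<forall>y\<in>C. \<forall>\<theta>\<in>{0..1}.
     f (x + \<theta> *\<^sub>R (y - x)) \<ge> ereal (1 - \<theta>) * f x + ereal \<theta> * f y
        - ereal (L / q * \<theta> * (1 - \<theta>) * N (y - x) powr q))"

definition unif_convex_fun :: "('a::real_vector \<Rightarrow> ereal) \<Rightarrow> ('a \<Rightarrow> real) \<Rightarrow> real \<Rightarrow> real \<Rightarrow> 'a set \<Rightarrow> bool" where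
  "unif_convex_fun Psi N p \<mu> C \<longleftrightarrow> (\<forall>x\<in>C. \<forall>y\<in>C. \<forall>\<theta>\<in>{0..1}.
     Psi (x + \<theta> *\<^sub>R (y - x)) \<le> ereal (1 - \<theta>) * Psi x + ereal \<theta> * Psi y
        - ereal (\<mu> / p * \<theta> * (1 - \<theta>) * N (y - x) powr p))"

definition unif_convex_set :: "'a::real_vector set \<Rightarrow> ('a \<Rightarrow> real) \<Rightarrow> real \<Rightarrow> real \<Rightarrow> bool" where
  "unif_convex_set C N p \<mu> \<longleftrightarrow> (\<forall>x\<in>C. \<forall>y\<in>C. \<forall>\<theta>\<in>{0..1}. \<forall>z. N z \<le> 1 \<longrightarrow>
     x + \<theta> *\<^sub>R (y - x) + (\<mu> / p * \<theta> * (1 - \<theta>) * N (y - x) powr p) *\<^sub>R z \<in> C)"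

definition indicator_e :: "'a set \<Rightarrow> 'a \<Rightarrow> ereal" where
  "indicator_e C x = (if x \<in> C then 0 else \<infinity>)"

definition growth21 :: "('a::real_inner \<Rightarrow> ereal) \<Rightarrow> ('a \<Rightarrow> ereal) \<Rightarrow> ('a \<Rightarrow> 'a) \<Rightarrow> real \<Rightarrow> bool" where
  "growth21 f Psi gradf M \<longleftrightarrow> (\<forall>x\<in>edom Psi. \<forall>s\<in>esubdiff (conj_fun Psi) (- gradf x).
     \<forall>\<theta>\<in>{0..1}. Dcal f Psi gradf x s \<theta> \<le> ereal (M * \<theta>\<^sup>2 / 2) * gap f Psi x (gradf x))"

end

theory Submission
  imports Defs
begin


lemma isn_neg: "is_norm N \<Longrightarrow> N (- x) = N x"
  unfolding is_norm_def by (metis abs_minus_cancel abs_one mult_1 scaleR_minus1_left)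

lemma isn_zero: "is_norm N \<Longrightarrow> N 0 = 0"
  unfolding is_norm_def by blast

lemma isn_sum: assumes "is_norm N" "finite B" shows "N (sum h B) \<le> (\<Sum>b\<in>B. N (h b))"
  using assms(2)
proof (induction B rule: finite_induct)
  case empty then show ?case by (simp add: isn_zero[OF assms(1)])
next
  case (insert a B)
  then show ?case using assms(1) unfolding is_norm_def
    by (smt (verit) sum.insert)
qed

lemma isn_upper:
  fixes N :: "'a::euclidean_space \<Rightarrow> real"
  assumes "is_norm N" shows "N x \<le> (\<Sum>b\<in>Basis. N b) * norm x"
proof -
  have "N x = N (\<Sum>b\<in>Basis. (x \<bullet> b) *\<^sub>R b)" by (simp add: euclidean_representation)
  also have "\<dots> \<le> (\<Sum>b\<in>Basis. N ((x \<bullet> b) *\<^sub>R b))" by (rule isn_sum[OF assms]) simp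
  also have "\<dots> \<le> (\<Sum>b\<in>Basis. norm x * N b)"
  proof (rule sum_mono)
    fix b :: 'a assume b: "b \<in> Basis"
    have "N ((x \<bullet> b) *\<^sub>R b) = \<bar>x \<bullet> b\<bar> * N b" using assms unfolding is_norm_def by blast
    also have "\<dots> \<le> norm x * N b"
      by (rule mult_right_mono) (use b Basis_le_norm assms in \<open>auto simp: is_norm_def\<close>)
    finally show "N ((x \<bullet> b) *\<^sub>R b) \<le> norm x * N b" .
  qed
  finally show ?thesis by (simp add: sum_distrib_left mult.commute)
qed

lemma isn_cont:
  fixes N :: "'a::euclidean_space \<Rightarrow> real"
  assumes "is_norm N" shows "continuous_on S N"
proof -
  define K where "K = (\<Sum>b\<in>Basis. N b)"
  have K: "K \<ge> 0" unfolding K_def using assms by (simp add: is_norm_def sum_nonneg)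
  have lip: "\<bar>N x - N y\<bar> \<le> K * dist x y" for x y
  proof -
    have "N (y + (x - y)) \<le> N y + N (x - y)" using assms unfolding is_norm_def by blast
    then have "N x \<le> N y + N (x - y)" by simp
    moreover have "N (x + (y - x)) \<le> N x + N (y - x)" using assms unfolding is_norm_def by blast
    then have "N y \<le> N x + N (y - x)" by simp
    moreover have "N (y - x) = N (x - y)" using isn_neg[OF assms, of "x - y"] by simp
    moreover have "N (x - y) \<le> K * dist x y" unfolding K_def dist_norm by (rule isn_upper[OF assms])
    ultimately show ?thesis by linarith
  qed
  show ?thesis unfolding continuous_on_iff
  proof (intro ballI allI impI)
    fix x0 :: 'a and e :: real assume "x0 \<in> S" "e > 0"
    show "\<exists>d>0. \<forall>x'\<in>S. dist x' x0 < d \<longrightarrow> dist (N x') (N x0) < e"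
    proof (intro exI[of _ "e / (K + 1)"] conjI ballI impI)
      show "e / (K + 1) > 0" using K \<open>e > 0\<close> by simp
      fix x' assume "x' \<in> S" "dist x' x0 < e / (K + 1)"
      then have "(K + 1) * dist x' x0 < e" using K by (simp add: field_simps)
      moreover have "\<bar>N x' - N x0\<bar> \<le> K * dist x' x0" by (rule lip)
      moreover have "K * dist x' x0 \<le> (K+1) * dist x' x0" by (simp add: mult_right_mono)
      ultimately show "dist (N x') (N x0) < e" by (simp add: dist_real_def)
    qed
  qed
qed

lemma isn_lower:
  fixes N :: "'a::euclidean_space \<Rightarrow> real"
  assumes "is_norm N" shows "\<exists>m>0. \<forall>x. m * norm x \<le> N x"
proof -
  obtain b :: 'a where b: "b \<in> Basis" using nonempty_Basis by blast
  have ne: "sphere (0::'a) 1 \<noteq> {}" using b by (auto intro!: exI[of _ b])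
  obtain x0 where x0: "x0 \<in> sphere 0 1" "\<forall>y\<in>sphere 0 1. N x0 \<le> N y"
    using continuous_attains_inf[OF compact_sphere ne isn_cont[OF assms]] by blast
  have "x0 \<noteq> 0" using x0 by auto
  then have m: "N x0 > 0" using assms unfolding is_norm_def by (metis less_eq_real_def)
  show ?thesis
  proof (intro exI[of _ "N x0"] conjI allI)
    show "N x0 > 0" by fact
    fix x :: 'a
    show "N x0 * norm x \<le> N x"
    proof (cases "x = 0")
      case True then show ?thesis by (simp add: isn_zero[OF assms])
    next
      case False
      have "N x0 \<le> N ((1 / norm x) *\<^sub>R x)" using x0 False by simp
      also have "\<dots> = N x / norm x" using assms False unfolding is_norm_def by simp
      finally show ?thesis using False by (simp add: field_simps)
    qed
  qed
qed

lemma dual_norm_props: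
  fixes N :: "'a::euclidean_space \<Rightarrow> real"
  assumes "is_norm N" shows "dual_norm N g \<ge> 0"
proof -
  obtain m where m: "m > 0" "\<forall>x. m * norm x \<le> N x" using isn_lower[OF assms] by blast
  have bdd: "bdd_above {g \<bullet> x | x. N x \<le> 1}"
  proof (rule bdd_aboveI[of _ "norm g / m"], clarify)
    fix x :: 'a assume "N x \<le> 1"
    then have "norm x \<le> 1 / m" using m by (smt (verit) divide_right_mono mult.commute nonzero_mult_div_cancel_left)
    have "g \<bullet> x \<le> norm g * norm x" by (simp add: norm_cauchy_schwarz)
    also have "\<dots> \<le> norm g * (1 / m)" by (rule mult_left_mono) (use \<open>norm x \<le> 1 / m\<close> in auto)
    finally show "g \<bullet> x \<le> norm g / m" by simp
  qed
  have "0 \<in> {g \<bullet> x | x. N x \<le> 1}" using isn_zero[OF assms] by (auto intro!: exI[of _ 0])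
  then show ?thesis unfolding dual_norm_def using bdd by (meson cSup_upper)
qed



lemma ereal_le_eps:
  assumes "\<And>e. e > 0 \<Longrightarrow> x \<le> ereal (t + e)" shows "x \<le> ereal t"
proof (rule ccontr)
  assume "\<not> x \<le> ereal t"
  then have "x > ereal t" by simp
  then show False
  proof (cases x)
    case (real r)
    then have "r > t" using \<open>x > ereal t\<close> by simp
    then have "r \<le> t + (r - t)/2" using assms[of "(r - t)/2"] real by simp
    then show False using \<open>r > t\<close> by (simp add: field_simps)
  next
    case PInf then show False using assms[of 1] by simp
  next
    case MInf then show False using \<open>x > ereal t\<close> by simp
  qed
qed

lemma epi_closed:
  fixes Psi :: "'a::euclidean_space \<Rightarrow> ereal"
  assumes "closed_fun Psi"
  shows "closed {p::'a\<times>real. Psi (fst p) \<le> ereal (snd p)}"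
  unfolding closed_sequential_limits
proof (intro allI impI, elim conjE)
  fix P :: "nat \<Rightarrow> 'a \<times> real" and l
  assume inS: "\<forall>n. P n \<in> {p. Psi (fst p) \<le> ereal (snd p)}" and lim: "P \<longlonglongrightarrow> l"
  have l1: "(\<lambda>n. fst (P n)) \<longlonglongrightarrow> fst l" by (rule tendsto_fst[OF lim])
  have l2: "(\<lambda>n. snd (P n)) \<longlonglongrightarrow> snd l" by (rule tendsto_snd[OF lim])
  have "Psi (fst l) \<le> ereal (snd l)"
  proof (rule ereal_le_eps)
    fix e :: real assume e: "e > 0"
    have ev: "eventually (\<lambda>n. snd (P n) < snd l + e) sequentially"
      using order_tendstoD(2)[OF l2, of "snd l + e"] e by simp
    have "eventually (\<lambda>n. fst (P n) \<in> {x. Psi x \<le> ereal (snd l + e)}) sequentially"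
    proof (rule eventually_mono[OF ev])
      fix n assume "snd (P n) < snd l + e"
      moreover have "Psi (fst (P n)) \<le> ereal (snd (P n))" using inS by auto
      ultimately show "fst (P n) \<in> {x. Psi x \<le> ereal (snd l + e)}"
        using order_trans[of "Psi (fst (P n))" "ereal (snd (P n))" "ereal (snd l + e)"] by simp
    qed
    then have "fst l \<in> {x. Psi x \<le> ereal (snd l + e)}"
      using Lim_in_closed_set[OF _ _ _ l1] assms unfolding closed_fun_def by (meson trivial_limit_sequentially)
    then show "Psi (fst l) \<le> ereal (snd l + e)" by simp
  qed
  then show "l \<in> {p. Psi (fst p) \<le> ereal (snd p)}" by simp
qed

lemma epi_convex:
  fixes Psi :: "'a::euclidean_space \<Rightarrow> ereal"
  assumes "proper_fun Psi" "convex_efun Psi"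
  shows "convex {p::'a\<times>real. Psi (fst p) \<le> ereal (snd p)}"
  unfolding convex_def
proof (intro ballI allI impI)
  fix p q :: "'a \<times> real" and u v :: real
  assume p: "p \<in> {p. Psi (fst p) \<le> ereal (snd p)}" and q: "q \<in> {p. Psi (fst p) \<le> ereal (snd p)}"
    and uv: "0 \<le> u" "0 \<le> v" "u + v = 1"
  obtain r1 where r1: "Psi (fst p) = ereal r1" "r1 \<le> snd p"
    using p assms(1) unfolding proper_fun_def by (cases "Psi (fst p)") auto
  obtain r2 where r2: "Psi (fst q) = ereal r2" "r2 \<le> snd q"
    using q assms(1) unfolding proper_fun_def by (cases "Psi (fst q)") auto
  have v01: "v \<in> {0..1}" using uv by auto
  have eq: "u *\<^sub>R fst p + v *\<^sub>R fst q = fst p + v *\<^sub>R (fst q - fst p)"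
  proof -
    have "u = 1 - v" using uv by simp
    then show ?thesis by (simp add: scaleR_diff_left scaleR_diff_right)
  qed
  have "Psi (u *\<^sub>R fst p + v *\<^sub>R fst q) \<le> ereal (1 - v) * Psi (fst p) + ereal v * Psi (fst q)"
    using assms(2) v01 unfolding convex_efun_def eq by blast
  also have "\<dots> = ereal ((1 - v) * r1 + v * r2)" using r1 r2 by simp
  also have "\<dots> \<le> ereal (u * snd p + v * snd q)"
  proof -
    have "1 - v = u" using uv by simp
    then have "(1 - v) * r1 \<le> u * snd p" using mult_left_mono[OF r1(2) uv(1)] by simp
    moreover have "v * r2 \<le> v * snd q" using uv r2 by (simp add: mult_left_mono)
    ultimately show ?thesis by simp
  qed
  finally show "u *\<^sub>R p + v *\<^sub>R q \<in> {p. Psi (fst p) \<le> ereal (snd p)}" by simp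
qed



lemma conj_upper: "ereal (u \<bullet> y) - Psi y \<le> conj_fun Psi u"
  unfolding conj_fun_def by (rule SUP_upper) simp

lemma subgrad_conj:
  fixes Psi :: "'a::euclidean_space \<Rightarrow> ereal"
  assumes cl: "closed_fun Psi" and pr: "proper_fun Psi" and cv: "convex_efun Psi"
    and s: "s \<in> esubdiff (conj_fun Psi) u"
  shows "Psi s \<noteq> \<infinity> \<and> (\<forall>y. ereal (- u \<bullet> s) + Psi s \<le> ereal (- u \<bullet> y) + Psi y)
     \<and> conj_fun Psi u = ereal (u \<bullet> s) - Psi s"
proof -
  from s have fin: "\<bar>conj_fun Psi u\<bar> \<noteq> \<infinity>" and sub: "\<And>w. conj_fun Psi u + ereal (s \<bullet> (w - u)) \<le> conj_fun Psi w"
    unfolding esubdiff_def by auto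
  obtain c where c: "conj_fun Psi u = ereal c" using fin by (cases "conj_fun Psi u") auto
  have cy: "u \<bullet> y - r \<le> c" if "Psi y = ereal r" for y r
    using conj_upper[of u y Psi] c that by simp
  define a where "a = u \<bullet> s - c"
  have key: "Psi s \<le> ereal a"
  proof (rule ccontr)
    assume nle: "\<not> Psi s \<le> ereal a"
    define E where "E = {p::'a\<times>real. Psi (fst p) \<le> ereal (snd p)}"
    have "(s, a) \<notin> E" using nle unfolding E_def by simp
    then obtain vb b where sep1: "inner vb (s, a) < b" and sep2: "\<forall>p\<in>E. inner vb p > b"
      using separating_hyperplane_closed_point[of E "(s,a)"] epi_closed[OF cl] epi_convex[OF pr cv]
      unfolding E_def by blast
    obtain v \<beta> where vb: "vb = (v, \<beta>)" by (cases vb)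
    have sepE: "v \<bullet> y + \<beta> * t > b" if "Psi y \<le> ereal t" for y t
    proof -
      have "\<forall>a ba. Psi a \<le> ereal ba \<longrightarrow> b < v \<bullet> a + \<beta> * ba" using sep2 unfolding E_def vb by auto
      then show ?thesis using that by blast
    qed
    obtain y0 where "Psi y0 \<noteq> \<infinity>" using pr unfolding proper_fun_def by blast
    then obtain t0 where t0: "Psi y0 = ereal t0" using pr unfolding proper_fun_def by (cases "Psi y0") auto
    have beta: "\<beta> \<ge> 0"
    proof (rule ccontr)
      assume "\<not> \<beta> \<ge> 0"
      then have bn: "\<beta> < 0" by simp
      define q where "q = (v \<bullet> y0 - b) / (- \<beta>)"
      define t where "t = \<bar>q\<bar> + \<bar>t0\<bar> + 1"
      have "t \<ge> t0" unfolding t_def by linarith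
      then have "Psi y0 \<le> ereal t" using t0 by simp
      then have "v \<bullet> y0 + \<beta> * t > b" by (rule sepE)
      moreover have "\<beta> * q = b - v \<bullet> y0" unfolding q_def using bn by (simp add: field_simps)
      moreover have "\<beta> * \<bar>q\<bar> \<le> \<beta> * q" using bn by (simp add: mult_left_mono_neg)
      moreover have "\<beta> * t = \<beta> * \<bar>q\<bar> + \<beta> * (\<bar>t0\<bar> + 1)" unfolding t_def by (simp add: algebra_simps)
      moreover have "\<beta> * (\<bar>t0\<bar> + 1) < 0" using bn by (simp add: mult_neg_pos)
      ultimately show False by linarith
    qed
    define \<epsilon> where "\<epsilon> = b - (v \<bullet> s + \<beta> * a)"
    have eps: "\<epsilon> > 0" using sep1 unfolding \<epsilon>_def vb by simp
    define w where "w = (1 / (1 + \<beta>)) *\<^sub>R (u - v)"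
    have nz: "1 + \<beta> \<noteq> 0" using beta by simp
    have wz: "(1 + \<beta>) * (w \<bullet> z) = u \<bullet> z - v \<bullet> z" for z
      unfolding w_def using nz by (simp add: inner_diff_left)
    have bound: "w \<bullet> y - r \<le> w \<bullet> s - a - \<epsilon> / (1 + \<beta>)" if "Psi y = ereal r" for y r
    proof -
      have h1: "u \<bullet> y - r \<le> c" by (rule cy[OF that])
      have h2: "v \<bullet> y + \<beta> * r > b" by (rule sepE) (use that in simp)
      have "(1 + \<beta>) * (w \<bullet> y - r) = u \<bullet> y - v \<bullet> y - (1 + \<beta>) * r"
        using wz[of y] by (simp add: algebra_simps)
      also have "\<dots> < (1 + \<beta>) * (w \<bullet> s - a) - \<epsilon>"
      proof -
        have "(1 + \<beta>) * (w \<bullet> s - a) = u \<bullet> s - v \<bullet> s - (1 + \<beta>) * a"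
          using wz[of s] by (simp add: algebra_simps)
        then show ?thesis using h1 h2 unfolding \<epsilon>_def a_def by (simp add: algebra_simps)
      qed
      also have "(1 + \<beta>) * (w \<bullet> s - a) - \<epsilon> = (1 + \<beta>) * (w \<bullet> s - a - \<epsilon> / (1 + \<beta>))"
        using nz by (simp add: right_diff_distrib)
      finally have "(1 + \<beta>) * (w \<bullet> y - r) < (1 + \<beta>) * (w \<bullet> s - a - \<epsilon> / (1 + \<beta>))" .
      then show ?thesis using beta by (simp add: mult_less_cancel_left_pos)
    qed
    have "conj_fun Psi w \<le> ereal (w \<bullet> s - a - \<epsilon> / (1 + \<beta>))"
      unfolding conj_fun_def
    proof (rule SUP_least)
      fix y
      show "ereal (w \<bullet> y) - Psi y \<le> ereal (w \<bullet> s - a - \<epsilon> / (1 + \<beta>))"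
      proof (cases "Psi y")
        case (real r) then show ?thesis using bound[OF real] by simp
      next
        case PInf then show ?thesis by simp
      next
        case MInf then show ?thesis using pr unfolding proper_fun_def by simp
      qed
    qed
    moreover have "conj_fun Psi u + ereal (s \<bullet> (w - u)) \<le> conj_fun Psi w" by (rule sub)
    ultimately have "ereal (c + s \<bullet> (w - u)) \<le> ereal (w \<bullet> s - a - \<epsilon> / (1 + \<beta>))" using c
      by (metis order_trans plus_ereal.simps(1))
    then have "c + s \<bullet> (w - u) \<le> w \<bullet> s - a - \<epsilon> / (1 + \<beta>)" by simp
    moreover have "\<epsilon> / (1 + \<beta>) > 0" using eps beta by simp
    ultimately show False unfolding a_def by (simp add: inner_diff_right inner_commute)
  qed
  then obtain ps where ps: "Psi s = ereal ps" "ps \<le> a" using pr unfolding proper_fun_def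
    by (cases "Psi s") auto
  have cs: "u \<bullet> s - ps \<le> c" by (rule cy[OF ps(1)])
  have opt: "ereal (- u \<bullet> s) + Psi s \<le> ereal (- u \<bullet> y) + Psi y" for y
  proof (cases "Psi y")
    case (real r) then show ?thesis using cy[OF real] ps unfolding a_def by simp
  next
    case PInf then show ?thesis using ps by simp
  next
    case MInf then show ?thesis using pr unfolding proper_fun_def by simp
  qed
  show ?thesis using opt ps cs c unfolding a_def by simp
qed



lemma deriv_line:
  fixes f :: "'a::euclidean_space \<Rightarrow> ereal"
  assumes "has_grad f g x"
  shows "((\<lambda>\<theta>. real_of_ereal (f (x + \<theta> *\<^sub>R d))) has_real_derivative (g \<bullet> d)) (at 0)"
proof -
  have fd: "((\<lambda>y. real_of_ereal (f y)) has_derivative (\<lambda>h. g \<bullet> h)) (at x)"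
    using assms unfolding has_grad_def by blast
  have ld: "((\<lambda>\<theta>::real. x + \<theta> *\<^sub>R d) has_derivative (\<lambda>h. h *\<^sub>R d)) (at 0)"
    by (auto intro!: derivative_eq_intros)
  have fd': "((\<lambda>y. real_of_ereal (f y)) has_derivative (\<lambda>h. g \<bullet> h)) (at ((\<lambda>\<theta>::real. x + \<theta> *\<^sub>R d) 0))"
    using fd by simp
  have "(((\<lambda>y. real_of_ereal (f y)) \<circ> (\<lambda>\<theta>::real. x + \<theta> *\<^sub>R d)) has_derivative ((\<lambda>h. g \<bullet> h) \<circ> (\<lambda>h. h *\<^sub>R d))) (at 0)"
    by (rule diff_chain_at[OF ld fd'])
  moreover have "((\<lambda>h. g \<bullet> h) \<circ> (\<lambda>h::real. h *\<^sub>R d)) = (*) (g \<bullet> d)"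
    by (auto simp: fun_eq_iff)
  ultimately show ?thesis unfolding has_field_derivative_def by (simp add: o_def)
qed

lemma right_quot_tendsto:
  fixes F :: "real \<Rightarrow> real"
  assumes "(F has_real_derivative D) (at 0)"
  shows "((\<lambda>\<theta>. (F \<theta> - F 0) / \<theta>) \<longlongrightarrow> D) (at_right 0)"
proof -
  have "(F has_real_derivative D) (at 0 within {0<..})" using assms by (rule has_field_derivative_at_within)
  then show ?thesis unfolding has_field_derivative_iff by simp
qed

lemma deriv_ge:
  fixes F G :: "real \<Rightarrow> real"
  assumes "(F has_real_derivative D) (at 0)" "\<And>\<theta>. 0 < \<theta> \<Longrightarrow> \<theta> < 1 \<Longrightarrow> G \<theta> \<le> (F \<theta> - F 0) / \<theta>"
    "(G \<longlongrightarrow> l) (at_right 0)"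
  shows "l \<le> D"
  by (rule tendsto_le[OF _ right_quot_tendsto[OF assms(1)] assms(3)])
     (auto intro!: eventually_at_rightI[of 0 1] assms(2))

lemma deriv_le:
  fixes F G :: "real \<Rightarrow> real"
  assumes "(F has_real_derivative D) (at 0)" "\<And>\<theta>. 0 < \<theta> \<Longrightarrow> \<theta> < 1 \<Longrightarrow> (F \<theta> - F 0) / \<theta> \<le> G \<theta>"
    "(G \<longlongrightarrow> l) (at_right 0)"
  shows "D \<le> l"
  by (rule tendsto_le[OF _ assms(3) right_quot_tendsto[OF assms(1)]])
     (auto intro!: eventually_at_rightI[of 0 1] assms(2))

lemma grad_fin: "has_grad f g x \<Longrightarrow> \<bar>f x\<bar> \<noteq> \<infinity>"
  unfolding has_grad_def by (metis centre_in_ball)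

lemma conv_grad_ineq:
  fixes f :: "'a::euclidean_space \<Rightarrow> ereal"
  assumes pr: "proper_fun f" and cv: "convex_efun f" and hg: "has_grad f g x"
  shows "f x + ereal (g \<bullet> (y - x)) \<le> f y"
proof (cases "f y")
  case PInf then show ?thesis using grad_fin[OF hg] by (cases "f x") auto
next
  case MInf then show ?thesis using pr unfolding proper_fun_def by simp
next
  case (real fy)
  obtain fx where fx: "f x = ereal fx" using grad_fin[OF hg] by (cases "f x") auto
  define F where "F = (\<lambda>\<theta>. real_of_ereal (f (x + \<theta> *\<^sub>R (y - x))))"
  have F0: "F 0 = fx" unfolding F_def using fx by simp
  have F1: "F 1 = fy" unfolding F_def using real by simp
  have Fle: "F \<theta> \<le> (1 - \<theta>) * fx + \<theta> * fy" if "0 \<le> \<theta>" "\<theta> \<le> 1" for \<theta>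
  proof -
    have "f (x + \<theta> *\<^sub>R (y - x)) \<le> ereal (1 - \<theta>) * f x + ereal \<theta> * f y"
      using cv that unfolding convex_efun_def by auto
    then have le: "f (x + \<theta> *\<^sub>R (y - x)) \<le> ereal ((1 - \<theta>) * fx + \<theta> * fy)" using fx real by simp
    moreover have "f (x + \<theta> *\<^sub>R (y - x)) \<noteq> -\<infinity>" using pr unfolding proper_fun_def by simp
    ultimately show ?thesis unfolding F_def by (cases "f (x + \<theta> *\<^sub>R (y - x))") auto
  qed
  have "g \<bullet> (y - x) \<le> fy - fx"
  proof (rule deriv_le[OF deriv_line[OF hg, of "y - x", folded F_def]])
    fix \<theta> :: real assume th: "0 < \<theta>" "\<theta> < 1"
    have "F \<theta> - F 0 \<le> \<theta> * (fy - fx)" using Fle[of \<theta>] th F0 by (simp add: algebra_simps)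
    then show "(F \<theta> - F 0) / \<theta> \<le> fy - fx" using th by (simp add: divide_le_eq mult.commute)
  qed simp
  then show ?thesis using fx real by simp
qed

lemma conj_at_grad:
  fixes f :: "'a::euclidean_space \<Rightarrow> ereal"
  assumes pr: "proper_fun f" and cv: "convex_efun f" and hg: "has_grad f g x"
  shows "conj_fun f g = ereal (g \<bullet> x) - f x"
proof (rule antisym)
  obtain fx where fx: "f x = ereal fx" using grad_fin[OF hg] by (cases "f x") auto
  show "conj_fun f g \<le> ereal (g \<bullet> x) - f x" unfolding conj_fun_def
  proof (rule SUP_least)
    fix y
    have h: "f x + ereal (g \<bullet> (y - x)) \<le> f y" by (rule conv_grad_ineq[OF pr cv hg])
    show "ereal (g \<bullet> y) - f y \<le> ereal (g \<bullet> x) - f x"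
    proof (cases "f y")
      case (real r) then show ?thesis using h fx by (simp add: inner_diff_right)
    next
      case PInf then show ?thesis by simp
    next
      case MInf then show ?thesis using pr unfolding proper_fun_def by simp
    qed
  qed
  show "ereal (g \<bullet> x) - f x \<le> conj_fun f g" by (rule conj_upper)
qed

lemma smooth_bound:
  fixes f :: "'a::euclidean_space \<Rightarrow> ereal"
  assumes hg: "has_grad f g x"
    and fy: "f y = ereal fy" and fx: "f x = ereal fx"
    and fin: "\<And>\<theta>. 0 \<le> \<theta> \<Longrightarrow> \<theta> \<le> 1 \<Longrightarrow> \<bar>f (x + \<theta> *\<^sub>R (y - x))\<bar> \<noteq> \<infinity>"
    and sm: "\<And>\<theta>. 0 \<le> \<theta> \<Longrightarrow> \<theta> \<le> 1 \<Longrightarrow> f (x + \<theta> *\<^sub>R (y - x)) \<ge> ereal (1 - \<theta>) * f x + ereal \<theta> * f y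
        - ereal (L / 2 * \<theta> * (1 - \<theta>) * R)"
  shows "fy - fx - g \<bullet> (y - x) \<le> L / 2 * R"
proof -
  define F where "F = (\<lambda>\<theta>. real_of_ereal (f (x + \<theta> *\<^sub>R (y - x))))"
  have F0: "F 0 = fx" unfolding F_def using fx by simp
  have Fge: "F \<theta> \<ge> (1 - \<theta>) * fx + \<theta> * fy - L / 2 * \<theta> * (1 - \<theta>) * R" if "0 \<le> \<theta>" "\<theta> \<le> 1" for \<theta>
  proof -
    have "f (x + \<theta> *\<^sub>R (y - x)) \<ge> ereal ((1 - \<theta>) * fx + \<theta> * fy - L / 2 * \<theta> * (1 - \<theta>) * R)"
      using sm[OF that] fx fy by simp
    moreover have "\<bar>f (x + \<theta> *\<^sub>R (y - x))\<bar> \<noteq> \<infinity>" by (rule fin[OF that])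
    ultimately show ?thesis unfolding F_def by (cases "f (x + \<theta> *\<^sub>R (y - x))") auto
  qed
  have "fy - fx - L / 2 * R \<le> g \<bullet> (y - x)"
  proof (rule deriv_ge[OF deriv_line[OF hg, of "y - x", folded F_def]])
    fix \<theta> :: real assume th: "0 < \<theta>" "\<theta> < 1"
    have "\<theta> * (fy - fx - L / 2 * (1 - \<theta>) * R) \<le> F \<theta> - F 0" using Fge[of \<theta>] th F0 by (simp add: algebra_simps)
    then show "fy - fx - L / 2 * (1 - \<theta>) * R \<le> (F \<theta> - F 0) / \<theta>" using th by (simp add: le_divide_eq mult.commute)
  next
    show "((\<lambda>\<theta>. fy - fx - L / 2 * (1 - \<theta>) * R) \<longlongrightarrow> fy - fx - L / 2 * R) (at_right 0)"
      by (auto intro!: tendsto_eq_intros)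
  qed
  then show ?thesis by simp
qed



lemma edom_seg:
  fixes Psi :: "'a::euclidean_space \<Rightarrow> ereal"
  assumes pr: "proper_fun Psi" and cv: "convex_efun Psi"
    and x: "x \<in> edom Psi" and y: "y \<in> edom Psi" and th: "0 \<le> \<theta>" "\<theta> \<le> 1"
  shows "x + \<theta> *\<^sub>R (y - x) \<in> edom Psi"
proof -
  obtain px where px: "Psi x = ereal px" using x pr unfolding edom_def proper_fun_def by (cases "Psi x") auto
  obtain py where py: "Psi y = ereal py" using y pr unfolding edom_def proper_fun_def by (cases "Psi y") auto
  have "Psi (x + \<theta> *\<^sub>R (y - x)) \<le> ereal (1 - \<theta>) * Psi x + ereal \<theta> * Psi y"
    using cv th unfolding convex_efun_def by auto
  also have "\<dots> = ereal ((1 - \<theta>) * px + \<theta> * py)" using px py by simp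
  finally show ?thesis unfolding edom_def by auto
qed

lemma isn_powr2: "is_norm N \<Longrightarrow> N z powr 2 = (N z)^2"
  unfolding is_norm_def by simp

lemma core:
  fixes f Psi :: "'a::euclidean_space \<Rightarrow> ereal" and gradf :: "'a \<Rightarrow> 'a"
    and N :: "'a \<Rightarrow> real" and L :: real
  assumes f_cpc: "proper_fun f" "convex_efun f"
    and Psi_cpc: "closed_fun Psi" "proper_fun Psi" "convex_efun Psi"
    and A1: "\<forall>x\<in>edom Psi. has_grad f (gradf x) x"
    and N: "is_norm N"
    and smooth: "unif_smooth f N 2 L (edom Psi)"
    and x: "x \<in> edom Psi" and s: "s \<in> esubdiff (conj_fun Psi) (- gradf x)"
  shows "\<exists>px ps. Psi x = ereal px \<and> Psi s = ereal ps \<and> s \<in> edom Psi \<and>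
   (\<forall>y. ereal (gradf x \<bullet> s) + Psi s \<le> ereal (gradf x \<bullet> y) + Psi y) \<and>
   gap f Psi x (gradf x) = ereal (px - ps + gradf x \<bullet> (x - s)) \<and>
   (\<forall>\<theta>\<in>{0..1}. \<exists>pt B. Psi (x + \<theta> *\<^sub>R (s - x)) = ereal pt \<and> B \<le> L/2 * \<theta>\<^sup>2 * (N (s - x))\<^sup>2 \<and>
       Dcal f Psi gradf x s \<theta> = ereal (B + pt - (1 - \<theta>) * px - \<theta> * ps))"
proof -
  define g where "g = gradf x"
  have sc: "Psi s \<noteq> \<infinity> \<and> (\<forall>y. ereal (- (- g) \<bullet> s) + Psi s \<le> ereal (- (- g) \<bullet> y) + Psi y)
     \<and> conj_fun Psi (- g) = ereal ((- g) \<bullet> s) - Psi s"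
    using subgrad_conj[OF Psi_cpc s] unfolding g_def .
  obtain px where px: "Psi x = ereal px" using x Psi_cpc(2) unfolding edom_def proper_fun_def by (cases "Psi x") auto
  obtain ps where ps: "Psi s = ereal ps" using sc Psi_cpc(2) unfolding proper_fun_def by (cases "Psi s") auto
  have sd: "s \<in> edom Psi" using ps unfolding edom_def by simp
  have opt: "\<forall>y. ereal (g \<bullet> s) + Psi s \<le> ereal (g \<bullet> y) + Psi y" using sc by simp
  have hgx: "has_grad f g x" using A1 x unfolding g_def by blast
  obtain fx where fx: "f x = ereal fx" using grad_fin[OF hgx] by (cases "f x") auto
  have ffin: "\<exists>fy. f y = ereal fy" if "y \<in> edom Psi" for y
  proof -
    have "has_grad f (gradf y) y" using A1 that by blast
    then have "\<bar>f y\<bar> \<noteq> \<infinity>" by (rule grad_fin)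
    then show ?thesis by (cases "f y") auto
  qed
  have gapeq: "gap f Psi x g = ereal (px - ps + g \<bullet> (x - s))"
    unfolding gap_def conj_at_grad[OF f_cpc hgx] using sc fx px ps by (simp add: inner_diff_right)
  have D: "\<exists>pt B. Psi (x + \<theta> *\<^sub>R (s - x)) = ereal pt \<and> B \<le> L/2 * \<theta>\<^sup>2 * (N (s - x))\<^sup>2 \<and>
       Dcal f Psi gradf x s \<theta> = ereal (B + pt - (1 - \<theta>) * px - \<theta> * ps)" if th: "\<theta> \<in> {0..1}" for \<theta>
  proof -
    define y where "y = x + \<theta> *\<^sub>R (s - x)"
    have yd: "y \<in> edom Psi" unfolding y_def using edom_seg[OF Psi_cpc(2,3) x sd] th by auto
    obtain pt where pt: "Psi y = ereal pt" using yd Psi_cpc(2) unfolding edom_def proper_fun_def by (cases "Psi y") auto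
    obtain fy where fy: "f y = ereal fy" using ffin[OF yd] by blast
    have segd: "x + \<tau> *\<^sub>R (y - x) \<in> edom Psi" if "0 \<le> \<tau>" "\<tau> \<le> 1" for \<tau>
      using edom_seg[OF Psi_cpc(2,3) x yd that] .
    have bnd: "fy - fx - g \<bullet> (y - x) \<le> L / 2 * (N (y - x) powr 2)"
    proof (rule smooth_bound[OF hgx fy fx])
      fix \<tau> :: real assume t: "0 \<le> \<tau>" "\<tau> \<le> 1"
      obtain v where "f (x + \<tau> *\<^sub>R (y - x)) = ereal v" using ffin[OF segd[OF t]] by blast
      then show "\<bar>f (x + \<tau> *\<^sub>R (y - x))\<bar> \<noteq> \<infinity>" by simp
      show "ereal (1 - \<tau>) * f x + ereal \<tau> * f y - ereal (L / 2 * \<tau> * (1 - \<tau>) * N (y - x) powr 2)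
           \<le> f (x + \<tau> *\<^sub>R (y - x))"
        using smooth x yd t unfolding unif_smooth_def by auto
    qed
    have "N (y - x) = \<theta> * N (s - x)" unfolding y_def using N th unfolding is_norm_def by simp
    then have bnd': "fy - fx - g \<bullet> (y - x) \<le> L/2 * \<theta>\<^sup>2 * (N (s - x))\<^sup>2"
      using bnd isn_powr2[OF N, of "y - x"] by (simp add: power_mult_distrib)
    have "Dcal f Psi gradf x s \<theta> = ereal ((fy - fx - g \<bullet> (y - x)) + pt - (1 - \<theta>) * px - \<theta> * ps)"
      unfolding Dcal_def bregman_def y_def[symmetric] g_def[symmetric] using fy fx pt px ps by simp
    then show ?thesis using bnd' pt unfolding y_def by blast
  qed
  show ?thesis using px ps sd opt gapeq D unfolding g_def by blast
qed



theorem proposition3: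
  fixes f Psi :: "'a::euclidean_space \<Rightarrow> ereal" and gradf :: "'a \<Rightarrow> 'a"
    and N :: "'a \<Rightarrow> real" and L :: real
  assumes f_cpc: "closed_fun f" "proper_fun f" "convex_efun f"
    and Psi_cpc: "closed_fun Psi" "proper_fun Psi" "convex_efun Psi"
    and A1: "\<forall>x\<in>edom Psi. has_grad f (gradf x) x"
    and A2: "\<forall>x\<in>edom Psi. argmin_lin (gradf x) Psi \<noteq> {}"
    and N: "is_norm N" and L: "L > 0"
    and smooth: "unif_smooth f N 2 L (edom Psi)"
  shows "(\<forall>\<mu>>0. unif_convex_fun Psi N 2 \<mu> (edom Psi) \<longrightarrow> growth21 f Psi gradf (2 * L / \<mu>))
       \<and> (\<forall>C \<mu>. closed C \<and> convex C \<and> Psi = indicator_e C \<and> \<mu> > 0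
            \<and> unif_convex_set C N 2 \<mu> \<and> Inf ((\<lambda>x. dual_norm N (gradf x)) ` C) > 0
            \<longrightarrow> growth21 f Psi gradf (2 * L / (Inf ((\<lambda>x. dual_norm N (gradf x)) ` C) * \<mu>)))"
proof (intro conjI allI impI)
  fix \<mu> :: real assume mu: "\<mu> > 0" and uc: "unif_convex_fun Psi N 2 \<mu> (edom Psi)"
  show "growth21 f Psi gradf (2 * L / \<mu>)" unfolding growth21_def
  proof (intro ballI)
    fix x s \<theta> assume x: "x \<in> edom Psi" and s: "s \<in> esubdiff (conj_fun Psi) (- gradf x)"
      and th: "\<theta> \<in> {0..1::real}"
    define g where "g = gradf x"
    define r where "r = N (s - x)"
    obtain px ps where px: "Psi x = ereal px" and ps: "Psi s = ereal ps" and sd: "s \<in> edom Psi"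
      and opt: "\<forall>y. ereal (g \<bullet> s) + Psi s \<le> ereal (g \<bullet> y) + Psi y"
      and gapeq: "gap f Psi x g = ereal (px - ps + g \<bullet> (x - s))"
      and D: "\<forall>\<theta>\<in>{0..1}. \<exists>pt B. Psi (x + \<theta> *\<^sub>R (s - x)) = ereal pt \<and> B \<le> L/2 * \<theta>\<^sup>2 * r\<^sup>2 \<and>
       Dcal f Psi gradf x s \<theta> = ereal (B + pt - (1 - \<theta>) * px - \<theta> * ps)"
      using core[OF f_cpc(2,3) Psi_cpc A1 N smooth x s] unfolding g_def r_def by blast
    define G where "G = px - ps + g \<bullet> (x - s)"
    have ucb: "pt \<le> (1 - \<tau>) * px + \<tau> * ps - \<mu> / 2 * \<tau> * (1 - \<tau>) * r\<^sup>2"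
      if t: "\<tau> \<in> {0..1}" and pt: "Psi (x + \<tau> *\<^sub>R (s - x)) = ereal pt" for \<tau> pt
    proof -
      have "Psi (x + \<tau> *\<^sub>R (s - x)) \<le> ereal (1 - \<tau>) * Psi x + ereal \<tau> * Psi s
        - ereal (\<mu> / 2 * \<tau> * (1 - \<tau>) * N (s - x) powr 2)"
        using uc x sd t unfolding unif_convex_fun_def by blast
      then show ?thesis using pt px ps isn_powr2[OF N, of "s - x"] unfolding r_def by simp
    qed
    have gapb: "\<mu> / 2 * r\<^sup>2 \<le> G"
    proof (rule field_le_mult_one_interval)
      fix \<tau> :: real assume t: "0 < \<tau>" "\<tau> < 1"
      then obtain pt B where pt: "Psi (x + \<tau> *\<^sub>R (s - x)) = ereal pt" using D by force
      have u: "pt \<le> (1 - \<tau>) * px + \<tau> * ps - \<mu> / 2 * \<tau> * (1 - \<tau>) * r\<^sup>2" using ucb[OF _ pt] t by simp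
      have o: "g \<bullet> s + ps \<le> g \<bullet> (x + \<tau> *\<^sub>R (s - x)) + pt" using opt[rule_format, of "x + \<tau> *\<^sub>R (s - x)"] pt ps by simp
      have "(1 - \<tau>) * (\<tau> * (\<mu> / 2 * r\<^sup>2)) \<le> (1 - \<tau>) * G"
        using u o unfolding G_def by (simp add: algebra_simps inner_diff_right)
      then show "\<tau> * (\<mu> / 2 * r\<^sup>2) \<le> G" using t by simp
    qed
    obtain pt B where pt: "Psi (x + \<theta> *\<^sub>R (s - x)) = ereal pt" and B: "B \<le> L/2 * \<theta>\<^sup>2 * r\<^sup>2"
      and De: "Dcal f Psi gradf x s \<theta> = ereal (B + pt - (1 - \<theta>) * px - \<theta> * ps)" using D th by blast
    have u: "pt \<le> (1 - \<theta>) * px + \<theta> * ps - \<mu> / 2 * \<theta> * (1 - \<theta>) * r\<^sup>2" by (rule ucb[OF th pt])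
    have nn: "0 \<le> \<mu> / 2 * \<theta> * (1 - \<theta>) * r\<^sup>2" using mu th by simp
    have l: "B + pt - (1 - \<theta>) * px - \<theta> * ps \<le> L/2 * \<theta>\<^sup>2 * r\<^sup>2" using B u nn by linarith
    have "L/2 * \<theta>\<^sup>2 * r\<^sup>2 = (2 * L / \<mu> * \<theta>\<^sup>2 / 2) * (\<mu> / 2 * r\<^sup>2)" using mu by (simp add: field_simps)
    also have "\<dots> \<le> (2 * L / \<mu> * \<theta>\<^sup>2 / 2) * G" by (rule mult_left_mono[OF gapb]) (use mu L in simp)
    finally have "B + pt - (1 - \<theta>) * px - \<theta> * ps \<le> (2 * L / \<mu> * \<theta>\<^sup>2 / 2) * G" using l by linarith
    then show "Dcal f Psi gradf x s \<theta> \<le> ereal (2 * L / \<mu> * \<theta>\<^sup>2 / 2) * gap f Psi x (gradf x)"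
      using De gapeq unfolding g_def[symmetric] G_def by simp
  qed
next
  fix C :: "'a set" and \<mu> :: real
  assume asm: "closed C \<and> convex C \<and> Psi = indicator_e C \<and> \<mu> > 0
            \<and> unif_convex_set C N 2 \<mu> \<and> Inf ((\<lambda>x. dual_norm N (gradf x)) ` C) > 0"
  define ell where "ell = Inf ((\<lambda>x. dual_norm N (gradf x)) ` C)"
  have mu: "\<mu> > 0" and ell: "ell > 0" and PsiC: "Psi = indicator_e C" and ucs: "unif_convex_set C N 2 \<mu>"
    using asm unfolding ell_def by auto
  have edC: "edom Psi = C" unfolding PsiC edom_def indicator_e_def by auto
  show "growth21 f Psi gradf (2 * L / (Inf ((\<lambda>x. dual_norm N (gradf x)) ` C) * \<mu>))"
    unfolding growth21_def ell_def[symmetric]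
  proof (intro ballI)
    fix x s \<theta> assume x: "x \<in> edom Psi" and s: "s \<in> esubdiff (conj_fun Psi) (- gradf x)"
      and th: "\<theta> \<in> {0..1::real}"
    define g where "g = gradf x"
    define r where "r = N (s - x)"
    obtain px ps where px: "Psi x = ereal px" and ps: "Psi s = ereal ps" and sd: "s \<in> edom Psi"
      and opt: "\<forall>y. ereal (g \<bullet> s) + Psi s \<le> ereal (g \<bullet> y) + Psi y"
      and gapeq: "gap f Psi x g = ereal (px - ps + g \<bullet> (x - s))"
      and D: "\<forall>\<theta>\<in>{0..1}. \<exists>pt B. Psi (x + \<theta> *\<^sub>R (s - x)) = ereal pt \<and> B \<le> L/2 * \<theta>\<^sup>2 * r\<^sup>2 \<and>
       Dcal f Psi gradf x s \<theta> = ereal (B + pt - (1 - \<theta>) * px - \<theta> * ps)"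
      using core[OF f_cpc(2,3) Psi_cpc A1 N smooth x s] unfolding g_def r_def by blast
    have xC: "x \<in> C" and sC: "s \<in> C" using x sd edC by auto
    have zero: "Psi y = ereal p \<Longrightarrow> p = 0" for y p unfolding PsiC indicator_e_def by (auto split: if_splits)
    have px0: "px = 0" and ps0: "ps = 0" using zero px ps by auto
    define G where "G = g \<bullet> (x - s)"
    have optC: "g \<bullet> s \<le> g \<bullet> y" if "y \<in> C" for y
      using opt[rule_format, of y] that ps ps0 unfolding PsiC indicator_e_def by simp
    define dn where "dn = dual_norm N g"
    have gapb: "\<mu> / 2 * r\<^sup>2 * dn \<le> G"
    proof (rule field_le_mult_one_interval)
      fix \<tau> :: real assume t: "0 < \<tau>" "\<tau> < 1"
      define c where "c = \<mu> / 2 * \<tau> * (1 - \<tau>) * r\<^sup>2"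
      have c0: "c \<ge> 0" unfolding c_def using mu t by simp
      define y where "y = x + \<tau> *\<^sub>R (s - x)"
      have yC: "y \<in> C" unfolding y_def using edom_seg[OF Psi_cpc(2,3) x sd] t edC by auto
      have ye: "g \<bullet> y - g \<bullet> s = (1 - \<tau>) * G" unfolding y_def G_def by (simp add: algebra_simps inner_diff_right)
      have cd: "c * dn \<le> (1 - \<tau>) * G"
      proof (cases "c = 0")
        case True then show ?thesis using optC[OF yC] ye by simp
      next
        case False
        then have cpos: "c > 0" using c0 by simp
        have "dn \<le> (g \<bullet> y - g \<bullet> s) / c" unfolding dn_def dual_norm_def
        proof (rule cSup_least)
          show "{g \<bullet> z |z. N z \<le> 1} \<noteq> {}" using isn_zero[OF N] by (auto intro!: exI[of _ 0])
        next
          fix v assume "v \<in> {g \<bullet> z |z. N z \<le> 1}"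
          then obtain z where v: "v = g \<bullet> z" and z: "N z \<le> 1" by auto
          have "N (- z) \<le> 1" using z isn_neg[OF N] by simp
          moreover have "\<tau> \<in> {0..1}" using t by simp
          ultimately have "y + c *\<^sub>R (- z) \<in> C"
            using ucs xC sC unfolding unif_convex_set_def y_def c_def isn_powr2[OF N] r_def by blast
          then have "g \<bullet> s \<le> g \<bullet> (y + c *\<^sub>R (- z))" by (rule optC)
          then have "c * v \<le> g \<bullet> y - g \<bullet> s" unfolding v by (simp add: inner_diff_right)
          then show "v \<le> (g \<bullet> y - g \<bullet> s) / c" using cpos by (simp add: le_divide_eq mult.commute)
        qed
        then show ?thesis using cpos ye by (simp add: le_divide_eq mult.commute)
      qed
      then have "(1 - \<tau>) * (\<tau> * (\<mu> / 2 * r\<^sup>2 * dn)) \<le> (1 - \<tau>) * G" unfolding c_def by (simp add: algebra_simps)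
      then show "\<tau> * (\<mu> / 2 * r\<^sup>2 * dn) \<le> G" using t by simp
    qed
    have elldn: "ell \<le> dn" unfolding ell_def dn_def g_def
    proof (rule cInf_lower)
      show "dual_norm N (gradf x) \<in> (\<lambda>x. dual_norm N (gradf x)) ` C" using xC by simp
      show "bdd_below ((\<lambda>x. dual_norm N (gradf x)) ` C)"
        by (rule bdd_belowI[of _ 0]) (use dual_norm_props[OF N] in auto)
    qed
    have gapb2: "\<mu> / 2 * r\<^sup>2 * ell \<le> G"
    proof -
      have "\<mu> / 2 * r\<^sup>2 * ell \<le> \<mu> / 2 * r\<^sup>2 * dn" by (rule mult_left_mono[OF elldn]) (use mu in simp)
      then show ?thesis using gapb by linarith
    qed
    obtain pt B where pt: "Psi (x + \<theta> *\<^sub>R (s - x)) = ereal pt" and B: "B \<le> L/2 * \<theta>\<^sup>2 * r\<^sup>2"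
      and De: "Dcal f Psi gradf x s \<theta> = ereal (B + pt - (1 - \<theta>) * px - \<theta> * ps)" using D th by blast
    have pt0: "pt = 0" using zero pt by auto
    have "L/2 * \<theta>\<^sup>2 * r\<^sup>2 = (2 * L / (ell * \<mu>) * \<theta>\<^sup>2 / 2) * (\<mu> / 2 * r\<^sup>2 * ell)" using mu ell by (simp add: field_simps)
    also have "\<dots> \<le> (2 * L / (ell * \<mu>) * \<theta>\<^sup>2 / 2) * G" by (rule mult_left_mono[OF gapb2]) (use mu L ell in simp)
    finally have cc: "L/2 * \<theta>\<^sup>2 * r\<^sup>2 \<le> (2 * L / (ell * \<mu>) * \<theta>\<^sup>2 / 2) * G" .
    have "B + pt - (1 - \<theta>) * px - \<theta> * ps = B" using pt0 px0 ps0 by simp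
    then have "B + pt - (1 - \<theta>) * px - \<theta> * ps \<le> (2 * L / (ell * \<mu>) * \<theta>\<^sup>2 / 2) * G"
      using B cc by linarith
    then show "Dcal f Psi gradf x s \<theta> \<le> ereal (2 * L / (ell * \<mu>) * \<theta>\<^sup>2 / 2) * gap f Psi x (gradf x)"
      using De gapeq px0 ps0 unfolding g_def[symmetric] G_def by simp
  qed
qed

end
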